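(* For every integer $k>9$, every subcubic graph $G$ with $\operatorname{tww}(G)\geq k$ that has minimal order among all subcubic graphs with twin-width at least $k$ has girth at least $5$.
   Context: All graphs are finite and simple. A graph is subcubic if its maximum degree is at most $3$. The girth is the length of a shortest cycle. A trigraph is a graph whose edges are each colored red or black; a graph is viewed as a trigraph with all edges black; the red degree of a vertex is the number of red edges incident to it. For a partition $\mathcal{P}$ of $V(G)$, the quotient trigraph $G/\mathcal{P}$ has vertex set $\mathcal{P}$; two distinct parts $U,W$ are joined by a black edge if every pair $\{u,w\}$ with $u\in U,w\in W$ is a black edge of $G$, are non-adjacent if no such pair is an edge, and are joined by a red edge otherwise. A contraction sequence of an $n$-vertex trigraph $G$ is a sequence $\mathcal{P}_n,\dots,\mathcal{P}_1$ of partitions of $V(G)$ where $\mathcal{P}_n$ is the partition into singletons and each $\mathcal{P}_i$ arises from $\mathcal{P}_{i+1}$ by merging two parts; its width is the maximum red degree over all $G/\mathcal{P}_i$, and $\operatorname{tww}(G)$ is the minimum width of a contraction sequence. *)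

theory Defs
  imports Main "HOL-Library.Extended_Nat"
begin

definition simple_graph :: "'a set \<Rightarrow> ('a \<Rightarrow> 'a \<Rightarrow> bool) \<Rightarrow> bool" where
  "simple_graph V E \<longleftrightarrow> finite V \<and> (\<forall>u v. E u v \<longrightarrow> E v u) \<and> (\<forall>v. \<not> E v v)
     \<and> (\<forall>u v. E u v \<longrightarrow> u \<in> V \<and> v \<in> V)"

definition subcubic :: "'a set \<Rightarrow> ('a \<Rightarrow> 'a \<Rightarrow> bool) \<Rightarrow> bool" where
  "subcubic V E \<longleftrightarrow> (\<forall>v\<in>V. card {u\<in>V. E v u} \<le> 3)"

text \<open>Cycles and girth (infinite for acyclic graphs).\<close>
definition has_cycle :: "'a set \<Rightarrow> ('a \<Rightarrow> 'a \<Rightarrow> bool) \<Rightarrow> nat \<Rightarrow> bool" where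
  "has_cycle V E l \<longleftrightarrow> l \<ge> 3 \<and> (\<exists>f :: nat \<Rightarrow> 'a. inj_on f {..<l} \<and> f ` {..<l} \<subseteq> V
      \<and> (\<forall>i<l. E (f i) (f ((i + 1) mod l))))"

definition girth :: "'a set \<Rightarrow> ('a \<Rightarrow> 'a \<Rightarrow> bool) \<Rightarrow> enat" where
  "girth V E = Inf {enat l | l. has_cycle V E l}"

text \<open>Trigraphs are given by a vertex set V, black edges B and red edges R.\<close>
definition red_adj :: "('a \<Rightarrow> 'a \<Rightarrow> bool) \<Rightarrow> ('a \<Rightarrow> 'a \<Rightarrow> bool) \<Rightarrow> 'a set \<Rightarrow> 'a set \<Rightarrow> bool" where
  "red_adj B R U W \<longleftrightarrow> \<not> (\<forall>u\<in>U. \<forall>w\<in>W. B u w) \<and> (\<exists>u\<in>U. \<exists>w\<in>W. B u w \<or> R u w)"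

definition red_deg :: "('a \<Rightarrow> 'a \<Rightarrow> bool) \<Rightarrow> ('a \<Rightarrow> 'a \<Rightarrow> bool) \<Rightarrow> 'a set set \<Rightarrow> 'a set \<Rightarrow> nat" where
  "red_deg B R P U = card {W \<in> P. W \<noteq> U \<and> red_adj B R U W}"

text \<open>A contraction sequence P_n, ..., P_1 (n = card V), encoded as a function on indices.\<close>
definition contraction_seq :: "'a set \<Rightarrow> (nat \<Rightarrow> 'a set set) \<Rightarrow> bool" where
  "contraction_seq V P \<longleftrightarrow>
     P (card V) = (\<lambda>v. {v}) ` V \<and>
     (\<forall>i. 1 \<le> i \<and> i < card V \<longrightarrow>
        (\<exists>X\<in>P (Suc i). \<exists>Y\<in>P (Suc i). X \<noteq> Y \<and> P i = insert (X \<union> Y) (P (Suc i) - {X, Y})))"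

definition seq_width_le :: "'a set \<Rightarrow> ('a \<Rightarrow> 'a \<Rightarrow> bool) \<Rightarrow> ('a \<Rightarrow> 'a \<Rightarrow> bool) \<Rightarrow> (nat \<Rightarrow> 'a set set) \<Rightarrow> nat \<Rightarrow> bool" where
  "seq_width_le V B R P d \<longleftrightarrow> (\<forall>i\<in>{1..card V}. \<forall>U\<in>P i. red_deg B R (P i) U \<le> d)"

definition tww_trigraph :: "'a set \<Rightarrow> ('a \<Rightarrow> 'a \<Rightarrow> bool) \<Rightarrow> ('a \<Rightarrow> 'a \<Rightarrow> bool) \<Rightarrow> nat" where
  "tww_trigraph V B R = (LEAST d. \<exists>P. contraction_seq V P \<and> seq_width_le V B R P d)"

definition tww :: "'a set \<Rightarrow> ('a \<Rightarrow> 'a \<Rightarrow> bool) \<Rightarrow> nat" where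
  "tww V E = tww_trigraph V E (\<lambda>_ _. False)"

end

theory Submission
  imports Defs
begin


definition part_ok :: "'a set \<Rightarrow> 'a set set \<Rightarrow> bool" where
  "part_ok V P \<longleftrightarrow> (\<forall>W\<in>P. W \<noteq> {} \<and> W \<subseteq> V) \<and> (\<forall>W1\<in>P. \<forall>W2\<in>P. W1 \<noteq> W2 \<longrightarrow> W1 \<inter> W2 = {})"

definition nbrs :: "'a set \<Rightarrow> ('a \<Rightarrow> 'a \<Rightarrow> bool) \<Rightarrow> 'a set \<Rightarrow> 'a set" where
  "nbrs V E Q = {y\<in>V. \<exists>q\<in>Q. E q y}"

lemma part_ok_merge:
  assumes "part_ok V P" "X \<in> P" "Y \<in> P" "X \<noteq> Y"
  shows "part_ok V (insert (X \<union> Y) (P - {X, Y}))"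
proof -
  have 1: "\<forall>W\<in>P. W \<noteq> {} \<and> W \<subseteq> V" and 2: "\<forall>W1\<in>P. \<forall>W2\<in>P. W1 \<noteq> W2 \<longrightarrow> W1 \<inter> W2 = {}"
    using assms(1) by (auto simp: part_ok_def)
  show ?thesis unfolding part_ok_def
  proof (rule conjI)
    show "\<forall>W\<in>insert (X \<union> Y) (P - {X, Y}). W \<noteq> {} \<and> W \<subseteq> V" using 1 assms(2,3) by auto
  next
    show "\<forall>W1\<in>insert (X \<union> Y) (P - {X, Y}). \<forall>W2\<in>insert (X \<union> Y) (P - {X, Y}). W1 \<noteq> W2 \<longrightarrow> W1 \<inter> W2 = {}"
    proof (intro ballI impI)
    fix W1 W2 assume a: "W1 \<in> insert (X \<union> Y) (P - {X, Y})" "W2 \<in> insert (X \<union> Y) (P - {X, Y})" "W1 \<noteq> W2"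
    show "W1 \<inter> W2 = {}"
    proof (cases "W1 = X \<union> Y")
      case True
      then have "W2 \<in> P - {X,Y}" using a by auto
      then show ?thesis using True 2 assms(2,3) by auto
    next
      case False
      then have w1: "W1 \<in> P - {X,Y}" using a by auto
      show ?thesis
      proof (cases "W2 = X \<union> Y")
        case True
        then show ?thesis using w1 2 assms(2,3) by auto
      next
        case False
        then show ?thesis using w1 a 2 by auto
      qed
    qed
    qed
  qed
qed

lemma part_ok_singletons: "part_ok V ((\<lambda>v. {v}) ` V)"
  unfolding part_ok_def by auto

lemma cs_step:
  assumes cs: "contraction_seq V P" and "1 \<le> i" "i < card V"
  shows "\<exists>X\<in>P (Suc i). \<exists>Y\<in>P (Suc i). X \<noteq> Y \<and> P i = insert (X \<union> Y) (P (Suc i) - {X, Y})"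
proof -
  have st: "\<forall>i. 1 \<le> i \<and> i < card V \<longrightarrow>
        (\<exists>X\<in>P (Suc i). \<exists>Y\<in>P (Suc i). X \<noteq> Y \<and> P i = insert (X \<union> Y) (P (Suc i) - {X, Y}))"
    using cs unfolding contraction_seq_def by (rule conjunct2)
  show ?thesis using st assms(2,3) by simp
qed

lemma cs_top: "contraction_seq V P \<Longrightarrow> P (card V) = (\<lambda>v. {v}) ` V"
  unfolding contraction_seq_def by (rule conjunct1)

lemma cs_part_ok:
  assumes cs: "contraction_seq V P" and i: "1 \<le> i" "i \<le> card V"
  shows "part_ok V (P i)"
proof -
  have "\<forall>i. 1 \<le> i \<and> i \<le> card V \<and> card V - i = j \<longrightarrow> part_ok V (P i)" for j
  proof (induction j)
    case 0
    show ?case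
    proof (intro allI impI)
      fix i assume a: "1 \<le> i \<and> i \<le> card V \<and> card V - i = 0"
      then have "i = card V" by simp
      then show "part_ok V (P i)" using cs_top[OF cs] part_ok_singletons by simp
    qed
  next
    case (Suc j)
    show ?case
    proof (intro allI impI)
      fix i assume a: "1 \<le> i \<and> i \<le> card V \<and> card V - i = Suc j"
      then have lt: "i < card V" by arith
      then have "1 \<le> Suc i \<and> Suc i \<le> card V \<and> card V - Suc i = j" using a by arith
      then have po: "part_ok V (P (Suc i))" using Suc.IH by blast
      from cs_step[OF cs _ lt] a obtain X Y where "X\<in>P (Suc i)" "Y\<in>P (Suc i)" "X \<noteq> Y"
         "P i = insert (X \<union> Y) (P (Suc i) - {X, Y})"
        by blast
      then show "part_ok V (P i)" using part_ok_merge[OF po] by simp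
    qed
  qed
  then show ?thesis using i by blast
qed

lemma part_ok_finite: "part_ok V P \<Longrightarrow> finite V \<Longrightarrow> finite P"
  unfolding part_ok_def by (meson PowI finite_Pow_iff finite_subset subsetI)

lemma parts_meet_card:
  assumes "part_ok V P" "finite S" "finite V"
  shows "card {W\<in>P. W \<inter> S \<noteq> {}} \<le> card S"
proof (rule card_inj_on_le[where f="\<lambda>W. SOME s. s \<in> W \<inter> S"])
  show "inj_on (\<lambda>W. SOME s. s \<in> W \<inter> S) {W \<in> P. W \<inter> S \<noteq> {}}"
  proof (rule inj_onI)
    fix W1 W2 assume a: "W1 \<in> {W \<in> P. W \<inter> S \<noteq> {}}" "W2 \<in> {W \<in> P. W \<inter> S \<noteq> {}}"
      "(SOME s. s \<in> W1 \<inter> S) = (SOME s. s \<in> W2 \<inter> S)"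
    have "(SOME s. s \<in> W1 \<inter> S) \<in> W1 \<inter> S" using a(1) by (metis (mono_tags, lifting) ex_in_conv mem_Collect_eq someI_ex)
    moreover have "(SOME s. s \<in> W2 \<inter> S) \<in> W2 \<inter> S" using a(2) by (metis (mono_tags, lifting) ex_in_conv mem_Collect_eq someI_ex)
    ultimately show "W1 = W2" using a assms(1) unfolding part_ok_def by auto
  qed
  show "(\<lambda>W. SOME s. s \<in> W \<inter> S) ` {W \<in> P. W \<inter> S \<noteq> {}} \<subseteq> S"
    by auto (metis (mono_tags, lifting) IntE disjoint_iff someI_ex)
  show "finite S" by fact
qed

lemma red_adj_edge: "red_adj B (\<lambda>_ _. False) U W \<Longrightarrow> \<exists>u\<in>U. \<exists>w\<in>W. B u w"
  unfolding red_adj_def by auto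

lemma red_deg_nbrs:
  assumes po: "part_ok V P" and sg: "simple_graph V E"
  shows "red_deg E (\<lambda>_ _. False) P Q \<le> card (nbrs V E Q)"
proof -
  have fV: "finite V" using sg unfolding simple_graph_def by auto
  have "{W \<in> P. W \<noteq> Q \<and> red_adj E (\<lambda>_ _. False) Q W} \<subseteq> {W\<in>P. W \<inter> nbrs V E Q \<noteq> {}}"
  proof
    fix W assume "W \<in> {W \<in> P. W \<noteq> Q \<and> red_adj E (\<lambda>_ _. False) Q W}"
    then have W: "W \<in> P" "red_adj E (\<lambda>_ _. False) Q W" by auto
    then obtain q w where "q \<in> Q" "w \<in> W" "E q w" using red_adj_edge by blast
    then have "w \<in> nbrs V E Q" using sg unfolding nbrs_def simple_graph_def by auto
    then show "W \<in> {W\<in>P. W \<inter> nbrs V E Q \<noteq> {}}" using \<open>w \<in> W\<close> W by auto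
  qed
  then have "red_deg E (\<lambda>_ _. False) P Q \<le> card {W\<in>P. W \<inter> nbrs V E Q \<noteq> {}}"
    unfolding red_deg_def using part_ok_finite[OF po fV] by (simp add: card_mono)
  also have "\<dots> \<le> card (nbrs V E Q)"
    using parts_meet_card[OF po _ fV] fV unfolding nbrs_def by auto
  finally show ?thesis .
qed

lemma nbrs_card:
  assumes sg: "simple_graph V E" and sc: "subcubic V E" and Q: "Q \<subseteq> V"
  shows "card (nbrs V E Q) \<le> 3 * card Q"
proof -
  have fV: "finite V" using sg unfolding simple_graph_def by auto
  have "nbrs V E Q = (\<Union>q\<in>Q. {y\<in>V. E q y})" unfolding nbrs_def by auto
  then have "card (nbrs V E Q) \<le> (\<Sum>q\<in>Q. card {y\<in>V. E q y})"
    using card_UN_le[of Q "\<lambda>q. {y\<in>V. E q y}"] finite_subset[OF Q fV] by simp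
  also have "\<dots> \<le> (\<Sum>q\<in>Q. 3)" using sc Q unfolding subcubic_def by (intro sum_mono) auto
  finally show ?thesis by simp
qed



definition qE :: "('a \<Rightarrow> 'b) \<Rightarrow> 'a set \<Rightarrow> ('a \<Rightarrow> 'a \<Rightarrow> bool) \<Rightarrow> 'b \<Rightarrow> 'b \<Rightarrow> bool" where
  "qE \<phi> V E i j \<longleftrightarrow> i \<noteq> j \<and> (\<exists>a\<in>V. \<exists>b\<in>V. E a b \<and> \<phi> a = i \<and> \<phi> b = j)"

definition lift :: "('a \<Rightarrow> 'b) \<Rightarrow> 'a set \<Rightarrow> 'b set \<Rightarrow> 'a set" where
  "lift \<phi> V X = {a\<in>V. \<phi> a \<in> X}"

lemma qE_simple:
  assumes "simple_graph V E" shows "simple_graph (\<phi> ` V) (qE \<phi> V E)"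
  using assms unfolding simple_graph_def qE_def by blast

lemma lift_image: "X \<subseteq> \<phi> ` V \<Longrightarrow> \<phi> ` lift \<phi> V X = X"
  unfolding lift_def by auto

lemma lift_inj: "inj_on (lift \<phi> V) (Pow (\<phi> ` V))"
  by (rule inj_onI) (metis PowD lift_image)

lemma lift_Un: "lift \<phi> V (X \<union> Y) = lift \<phi> V X \<union> lift \<phi> V Y"
  unfolding lift_def by auto

lemma lift_merge:
  assumes A: "\<forall>W\<in>A. W \<subseteq> \<phi> ` V" and XY: "X\<in>A" "Y\<in>A" "X\<noteq>Y"
  shows "lift \<phi> V ` insert (X\<union>Y) (A - {X,Y}) = insert (lift \<phi> V X \<union> lift \<phi> V Y) (lift \<phi> V ` A - {lift \<phi> V X, lift \<phi> V Y})"
    and "lift \<phi> V X \<in> lift \<phi> V ` A" "lift \<phi> V Y \<in> lift \<phi> V ` A" "lift \<phi> V X \<noteq> lift \<phi> V Y"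
proof -
  have "lift \<phi> V ` (A - {X,Y}) = lift \<phi> V ` A - lift \<phi> V ` {X,Y}"
    by (rule inj_on_image_set_diff[OF lift_inj]) (use A XY in auto)
  then show "lift \<phi> V ` insert (X\<union>Y) (A - {X,Y}) = insert (lift \<phi> V X \<union> lift \<phi> V Y) (lift \<phi> V ` A - {lift \<phi> V X, lift \<phi> V Y})"
    by (simp add: lift_Un)
  show "lift \<phi> V X \<in> lift \<phi> V ` A" "lift \<phi> V Y \<in> lift \<phi> V ` A" using XY by auto
  show "lift \<phi> V X \<noteq> lift \<phi> V Y" using XY A lift_image by metis
qed

lemma lift_red:
  assumes sg: "simple_graph V E" and sc': "subcubic (\<phi> ` V) (qE \<phi> V E)"
    and po: "part_ok (\<phi> ` V) P" and X: "X \<in> P"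
  shows "red_deg E (\<lambda>_ _. False) (lift \<phi> V ` P) (lift \<phi> V X) \<le> max (red_deg (qE \<phi> V E) (\<lambda>_ _. False) P X) 9"
proof -
  let ?L = "lift \<phi> V" and ?E' = "qE \<phi> V E" and ?F = "\<lambda>_ _. False :: bool" and ?V' = "\<phi> ` V"
  have fV: "finite V" using sg unfolding simple_graph_def by auto
  have fV': "finite ?V'" using fV by simp
  have fP: "finite P" using part_ok_finite[OF po fV'] .
  have sg': "simple_graph ?V' ?E'" using qE_simple[OF sg] .
  have Psub: "\<forall>W\<in>P. W \<subseteq> ?V' \<and> W \<noteq> {}" using po unfolding part_ok_def by auto
  have Pdisj: "\<forall>W1\<in>P. \<forall>W2\<in>P. W1 \<noteq> W2 \<longrightarrow> W1 \<inter> W2 = {}" using po unfolding part_ok_def by auto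
  have Leq: "?L W = ?L X \<longleftrightarrow> W = X" if "W \<in> P" for W
    using lift_image Psub that X by metis
  define S where "S = {W\<in>P. W \<noteq> X \<and> red_adj E ?F (?L X) (?L W)}"
  have Rset: "{U \<in> ?L ` P. U \<noteq> ?L X \<and> red_adj E ?F (?L X) U} = ?L ` S"
    unfolding S_def using Leq by auto
  have fS: "finite S" unfolding S_def using fP by simp
  have rd: "red_deg E ?F (?L ` P) (?L X) = card (?L ` S)"
    unfolding red_deg_def using Rset by simp
  also have "\<dots> \<le> card S" using card_image_le[OF fS] .
  finally have rd2: "red_deg E ?F (?L ` P) (?L X) \<le> card S" .
  have key: "\<exists>x\<in>X. \<exists>w\<in>W. ?E' x w" if "W \<in> S" for W
  proof -
    from that have W: "W \<in> P" "W \<noteq> X" "red_adj E ?F (?L X) (?L W)" unfolding S_def by auto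
    then obtain a b where ab: "a \<in> ?L X" "b \<in> ?L W" "E a b" using red_adj_edge by blast
    then have "\<phi> a \<in> X" "\<phi> b \<in> W" "a \<in> V" "b \<in> V" unfolding lift_def by auto
    moreover have "X \<inter> W = {}" using Pdisj W X by auto
    ultimately have "?E' (\<phi> a) (\<phi> b)" unfolding qE_def using ab by auto
    then show ?thesis using \<open>\<phi> a \<in> X\<close> \<open>\<phi> b \<in> W\<close> by blast
  qed
  show ?thesis
  proof (cases "\<exists>W\<in>S. \<forall>x\<in>X. \<forall>w\<in>W. ?E' x w")
    case True
    then obtain W where W: "W \<in> S" "\<forall>x\<in>X. \<forall>w\<in>W. ?E' x w" by blast
    then have "W \<in> P" unfolding S_def by auto
    then have "W \<subseteq> ?V'" "W \<noteq> {}" using Psub by auto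
    then obtain w0 where w0: "w0 \<in> W" "w0 \<in> ?V'" by blast
    have symE': "\<And>x y. ?E' x y \<Longrightarrow> ?E' y x" using sg' unfolding simple_graph_def by blast
    have XV0: "X \<subseteq> ?V'" using Psub X by auto
    have "X \<subseteq> {x\<in>?V'. ?E' w0 x}"
    proof
      fix x assume "x \<in> X"
      then have "?E' x w0" using W(2) w0 by blast
      then show "x \<in> {x\<in>?V'. ?E' w0 x}" using symE' XV0 \<open>x \<in> X\<close> by auto
    qed
    moreover have "card {x\<in>?V'. ?E' w0 x} \<le> 3" using sc' w0 unfolding subcubic_def by auto
    moreover have "finite {x\<in>?V'. ?E' w0 x}" using fV' by auto
    ultimately have cX: "card X \<le> 3" by (meson card_mono le_trans)
    have XV: "X \<subseteq> ?V'" using Psub X by auto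
    have "S \<subseteq> {W\<in>P. W \<inter> nbrs ?V' ?E' X \<noteq> {}}"
    proof
      fix W assume "W \<in> S"
      then obtain x w where "x\<in>X" "w\<in>W" "?E' x w" using key by blast
      moreover have "W \<in> P" using \<open>W \<in> S\<close> unfolding S_def by auto
      ultimately show "W \<in> {W\<in>P. W \<inter> nbrs ?V' ?E' X \<noteq> {}}"
        unfolding nbrs_def using Psub by blast
    qed
    then have "card S \<le> card {W\<in>P. W \<inter> nbrs ?V' ?E' X \<noteq> {}}"
      using fP by (intro card_mono) auto
    also have "\<dots> \<le> card (nbrs ?V' ?E' X)"
      using parts_meet_card[OF po _ fV'] fV' unfolding nbrs_def by auto
    also have "\<dots> \<le> 3 * card X" using nbrs_card[OF sg' sc' XV] .
    also have "\<dots> \<le> 9" using cX by simp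
    finally show ?thesis using rd2 by simp
  next
    case False
    have "S \<subseteq> {W \<in> P. W \<noteq> X \<and> red_adj ?E' ?F X W}"
    proof
      fix W assume "W \<in> S"
      then have "W \<in> P" "W \<noteq> X" unfolding S_def by auto
      moreover have "red_adj ?E' ?F X W"
        using key[OF \<open>W \<in> S\<close>] False \<open>W \<in> S\<close> unfolding red_adj_def by blast
      ultimately show "W \<in> {W \<in> P. W \<noteq> X \<and> red_adj ?E' ?F X W}" by simp
    qed
    then have "card S \<le> red_deg ?E' ?F P X"
      unfolding red_deg_def using fP by (intro card_mono) auto
    then show ?thesis using rd2 by simp
  qed
qed



definition iseq :: "nat \<Rightarrow> nat \<Rightarrow> nat set set" where
  "iseq m i = insert {..m-i} ((\<lambda>j. {j}) ` {m-i<..<m})"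

lemma iseq_cs:
  assumes m: "1 \<le> m"
  shows "contraction_seq {..<m} (iseq m)"
  unfolding contraction_seq_def
proof (intro conjI allI impI)
  have "{..<m} = insert 0 {0<..<m}" using m by auto
  then show "iseq m (card {..<m}) = (\<lambda>v. {v}) ` {..<m}"
    unfolding iseq_def by (simp add: atMost_0)
next
  fix i assume i: "1 \<le> i \<and> i < card {..<m}"
  then have i1: "1 \<le> i" "i < m" by auto
  define X where "X = {..m - Suc i}"
  define Y where "Y = {m - i}"
  define Rest where "Rest = (\<lambda>j. {j}) ` {m-i<..<m}"
  have e1: "{m - Suc i<..<m} = insert (m-i) {m-i<..<m}" using i1 by auto
  have P1: "iseq m (Suc i) = insert X (insert Y Rest)"
    unfolding iseq_def X_def Y_def Rest_def using e1 by simp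
  have "X \<notin> Rest"
  proof
    assume "X \<in> Rest"
    then obtain j where "X = {j}" "m-i < j" unfolding Rest_def by auto
    moreover have "0 \<in> X" unfolding X_def by simp
    ultimately show False by auto
  qed
  moreover have "Y \<notin> Rest" unfolding Y_def Rest_def by auto
  moreover have "X \<noteq> Y" unfolding X_def Y_def using i1 by auto
  ultimately have D: "iseq m (Suc i) - {X, Y} = Rest" using P1 by auto
  have U: "X \<union> Y = {..m-i}" unfolding X_def Y_def using i1 by auto
  have "iseq m i = insert (X \<union> Y) (iseq m (Suc i) - {X, Y})"
    using D U unfolding iseq_def Rest_def by simp
  moreover have "X \<in> iseq m (Suc i)" "Y \<in> iseq m (Suc i)" using P1 by auto
  ultimately show "\<exists>X\<in>iseq m (Suc i). \<exists>Y\<in>iseq m (Suc i). X \<noteq> Y \<and> iseq m i = insert (X \<union> Y) (iseq m (Suc i) - {X, Y})"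
    using \<open>X \<noteq> Y\<close> by blast
qed

lemma width_exists:
  assumes cs: "contraction_seq V P" and fV: "finite V"
  shows "seq_width_le V B R P (2 ^ card V)"
  unfolding seq_width_le_def
proof (intro ballI)
  fix i U assume i: "i \<in> {1..card V}" and U: "U \<in> P i"
  have po: "part_ok V (P i)" using cs_part_ok[OF cs] i by auto
  then have sub: "P i \<subseteq> Pow V" unfolding part_ok_def by auto
  have "red_deg B R (P i) U \<le> card (P i)"
    unfolding red_deg_def using finite_subset[OF sub] fV by (intro card_mono) auto
  also have "\<dots> \<le> card (Pow V)" using sub fV by (intro card_mono) auto
  also have "\<dots> = 2 ^ card V" using fV by (simp add: card_Pow)
  finally show "red_deg B R (P i) U \<le> 2 ^ card V" .
qed

lemma tww_witness:
  assumes "contraction_seq V P0" "seq_width_le V B R P0 d0"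
  shows "\<exists>P. contraction_seq V P \<and> seq_width_le V B R P (tww_trigraph V B R)"
proof -
  have "\<exists>d. \<exists>P. contraction_seq V P \<and> seq_width_le V B R P d" using assms by blast
  from LeastI_ex[OF this] show ?thesis unfolding tww_trigraph_def .
qed

lemma tww_le:
  assumes "contraction_seq V P" "seq_width_le V B R P d"
  shows "tww_trigraph V B R \<le> d"
  unfolding tww_trigraph_def by (rule Least_le) (use assms in blast)



lemma reduce:
  fixes V :: "'a set" and E and \<phi> :: "'a \<Rightarrow> nat" and Q :: "nat \<Rightarrow> 'a set set"
  assumes k9: "k > 9" and sg: "simple_graph V E" and sc: "subcubic V E" and tw: "tww V E \<ge> k"
    and minim: "\<forall>(W :: nat set) F. simple_graph W F \<and> subcubic W F \<and> tww W F \<ge> k \<longrightarrow> card V \<le> card W"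
    and img: "\<phi> ` V = {..<m}" and mlt: "m < card V" and ne: "V \<noteq> {}"
    and sc': "subcubic {..<m} (qE \<phi> V E)"
    and Q1: "Q (card V) = (\<lambda>v. {v}) ` V"
    and Q2: "Q m = lift \<phi> V ` ((\<lambda>j. {j}) ` {..<m})"
    and Q3: "\<forall>i. m \<le> i \<and> i < card V \<longrightarrow> (\<exists>X\<in>Q (Suc i). \<exists>Y\<in>Q (Suc i). X \<noteq> Y \<and> Q i = insert (X \<union> Y) (Q (Suc i) - {X, Y}))"
    and Q4: "\<forall>i. m < i \<and> i \<le> card V \<longrightarrow> (\<forall>U\<in>Q i. card U \<le> 3)"
  shows False
proof -
  let ?F = "\<lambda>_ _. False :: bool"
  let ?E' = "qE \<phi> V E"
  have m1: "1 \<le> m"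
  proof (rule ccontr)
    assume "\<not> 1 \<le> m"
    then have "m = 0" by simp
    then have "\<phi> ` V = {}" using img by simp
    then show False using ne by simp
  qed
  have sg': "simple_graph {..<m} ?E'" using qE_simple[OF sg, of \<phi>] img by simp
  have "\<not> tww {..<m} ?E' \<ge> k"
  proof
    assume "k \<le> tww {..<m} ?E'"
    then have "card V \<le> card {..<m::nat}" using minim sg' sc' by blast
    then show False using mlt by simp
  qed
  then have twl: "tww {..<m} ?E' \<le> k - 1" by simp
  obtain P' where P': "contraction_seq {..<m} P'" "seq_width_le {..<m} ?E' ?F P' (tww {..<m} ?E')"
    using tww_witness[OF iseq_cs[OF m1] width_exists[OF iseq_cs[OF m1]]] unfolding tww_def by auto
  have P'top: "P' m = (\<lambda>v. {v}) ` {..<m}" using cs_top[OF P'(1)] by simp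
  define PG where "PG i = (if i \<le> m then lift \<phi> V ` P' i else Q i)" for i
  have csG: "contraction_seq V PG"
    unfolding contraction_seq_def
  proof (intro conjI allI impI)
    show "PG (card V) = (\<lambda>v. {v}) ` V" using Q1 mlt unfolding PG_def by simp
  next
    fix i assume i: "1 \<le> i \<and> i < card V"
    show "\<exists>X\<in>PG (Suc i). \<exists>Y\<in>PG (Suc i). X \<noteq> Y \<and> PG i = insert (X \<union> Y) (PG (Suc i) - {X, Y})"
    proof (cases "i < m")
      case True
      obtain X Y where XY: "X\<in>P' (Suc i)" "Y\<in>P' (Suc i)" "X \<noteq> Y" "P' i = insert (X \<union> Y) (P' (Suc i) - {X, Y})"
        using cs_step[OF P'(1), of i] i True by auto
      have po: "part_ok {..<m} (P' (Suc i))" using cs_part_ok[OF P'(1), of "Suc i"] True by simp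
      then have A: "\<forall>W\<in>P' (Suc i). W \<subseteq> \<phi> ` V" using img unfolding part_ok_def by auto
      note lm = lift_merge[OF A XY(1-3)]
      have e: "PG i = lift \<phi> V ` P' i" "PG (Suc i) = lift \<phi> V ` P' (Suc i)" unfolding PG_def using True by auto
      show ?thesis
        apply (rule bexI[of _ "lift \<phi> V X"])
         apply (rule bexI[of _ "lift \<phi> V Y"])
        using lm XY(4) e by auto
    next
      case False
      have "PG i = Q i"
      proof (cases "i = m")
        case True
        then show ?thesis unfolding PG_def using P'top Q2 by simp
      next
        case False
        then show ?thesis unfolding PG_def using \<open>\<not> i < m\<close> by simp
      qed
      moreover have "PG (Suc i) = Q (Suc i)" unfolding PG_def using False by simp
      ultimately show ?thesis using Q3 i False by auto
    qed
  qed
  have wG: "seq_width_le V E ?F PG (k - 1)"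
    unfolding seq_width_le_def
  proof (intro ballI)
    fix i U assume i: "i \<in> {1..card V}" and U: "U \<in> PG i"
    show "red_deg E ?F (PG i) U \<le> k - 1"
    proof (cases "i \<le> m")
      case True
      then have PGi: "PG i = lift \<phi> V ` P' i" unfolding PG_def by simp
      then obtain X where X: "X \<in> P' i" "U = lift \<phi> V X" using U by auto
      have po: "part_ok (\<phi> ` V) (P' i)" using cs_part_ok[OF P'(1), of i] True i img by simp
      have sc'': "subcubic (\<phi> ` V) ?E'" using sc' img by simp
      have "red_deg E ?F (PG i) U \<le> max (red_deg ?E' ?F (P' i) X) 9"
        using lift_red[OF sg sc'' po X(1)] PGi X(2) by simp
      moreover have "red_deg ?E' ?F (P' i) X \<le> tww {..<m} ?E'"
        using P'(2) X(1) i True unfolding seq_width_le_def by auto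
      ultimately show ?thesis using twl k9 by linarith
    next
      case False
      then have PGi: "PG i = Q i" unfolding PG_def by simp
      have po: "part_ok V (PG i)" using cs_part_ok[OF csG] i by auto
      then have UV: "U \<subseteq> V" using U unfolding part_ok_def by auto
      have "m < i \<and> i \<le> card V" using False i by auto
      then have cU: "card U \<le> 3" using Q4 U PGi by auto
      have "red_deg E ?F (PG i) U \<le> card (nbrs V E U)" using red_deg_nbrs[OF po sg] .
      also have "\<dots> \<le> 3 * card U" using nbrs_card[OF sg sc UV] .
      finally show ?thesis using cU k9 by linarith
    qed
  qed
  have "tww V E \<le> k - 1" using tww_le[OF csG wG] unfolding tww_def .
  then show False using tw k9 by linarith
qed



lemma lift_singletons:
  "lift \<phi> V ` ((\<lambda>j. {j}) ` (\<phi> ` V)) = (\<lambda>a. {b\<in>V. \<phi> b = \<phi> a}) ` V"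
  unfolding lift_def by (auto simp: image_image)

lemma qE_deg:
  assumes "s \<in> V" and that: "finite V"
  shows "card {j \<in> \<phi> ` V. qE \<phi> V E (\<phi> s) j} \<le> card {b\<in>V. \<exists>a\<in>V. \<phi> a = \<phi> s \<and> E a b \<and> \<phi> b \<noteq> \<phi> s}"
proof -
  have "{j \<in> \<phi> ` V. qE \<phi> V E (\<phi> s) j} \<subseteq> \<phi> ` {b\<in>V. \<exists>a\<in>V. \<phi> a = \<phi> s \<and> E a b \<and> \<phi> b \<noteq> \<phi> s}"
  proof
    fix j assume "j \<in> {j \<in> \<phi> ` V. qE \<phi> V E (\<phi> s) j}"
    then obtain a b where ab: "a\<in>V" "b\<in>V" "E a b" "\<phi> a = \<phi> s" "\<phi> b = j" "j \<noteq> \<phi> s"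
      unfolding qE_def by auto
    then show "j \<in> \<phi> ` {b\<in>V. \<exists>a\<in>V. \<phi> a = \<phi> s \<and> E a b \<and> \<phi> b \<noteq> \<phi> s}"
      by (intro image_eqI[of _ _ b]) auto
  qed
  then have "card {j \<in> \<phi> ` V. qE \<phi> V E (\<phi> s) j} \<le> card (\<phi> ` {b\<in>V. \<exists>a\<in>V. \<phi> a = \<phi> s \<and> E a b \<and> \<phi> b \<noteq> \<phi> s})"
    using that by (intro card_mono) auto
  also have "\<dots> \<le> card {b\<in>V. \<exists>a\<in>V. \<phi> a = \<phi> s \<and> E a b \<and> \<phi> b \<noteq> \<phi> s}"
    using that by (intro card_image_le) auto
  finally show ?thesis .
qed

lemma nbr_card: "simple_graph V E \<Longrightarrow> subcubic V E \<Longrightarrow> s \<in> V \<Longrightarrow> card {y\<in>V. E s y} \<le> 3"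
  unfolding subcubic_def by auto

lemma nbr_finite: "simple_graph V E \<Longrightarrow> finite {y\<in>V. E s y}"
  unfolding simple_graph_def by auto

lemma tri_case:
  fixes V :: "'a set"
  assumes k9: "k > 9" and sg: "simple_graph V E" and sc: "subcubic V E" and tw: "tww V E \<ge> k"
    and minim: "\<forall>(W :: nat set) F. simple_graph W F \<and> subcubic W F \<and> tww W F \<ge> k \<longrightarrow> card V \<le> card W"
    and e: "E u v" "E v w" "E w u"
  shows False
proof -
  have fV: "finite V" and sym: "\<And>x y. E x y \<Longrightarrow> E y x" and irr: "\<And>x. \<not> E x x"
    and inV: "\<And>x y. E x y \<Longrightarrow> x \<in> V \<and> y \<in> V"
    using sg unfolding simple_graph_def by auto
  have d: "u \<noteq> v" "v \<noteq> w" "w \<noteq> u" using e irr by auto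
  have V: "u \<in> V" "v \<in> V" "w \<in> V" using e inV by auto
  define \<psi> where "\<psi> a = (if a = v then u else a)" for a
  define V2 where "V2 = V - {v}"
  have fV2: "finite V2" using fV unfolding V2_def by simp
  obtain h :: "'a \<Rightarrow> nat" and m :: nat where h: "h ` V2 = {i. i < m}" "inj_on h V2"
    using finite_imp_inj_to_nat_seg[OF fV2] by blast
  define \<phi> where "\<phi> a = h (\<psi> a)" for a
  have psiV: "\<psi> ` V = V2" unfolding \<psi>_def V2_def using V d by auto
  have "\<phi> ` V = h ` (\<psi> ` V)" unfolding \<phi>_def by (simp add: image_image)
  then have img: "\<phi> ` V = {..<m}" using h(1) psiV by (simp add: lessThan_def)
  have "card V2 = card (h ` V2)" using card_image[OF h(2)] by simp
  then have cV2: "card V2 = m" using h(1) by simp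
  have cV: "card V2 = card V - 1" unfolding V2_def using V fV by simp
  have "card {u,v,w} = 3" using d by auto
  moreover have "card {u,v,w} \<le> card V" using V fV by (intro card_mono) auto
  ultimately have cVpos: "card V \<ge> 3" by simp
  have mlt: "m < card V" using cV2 cV cVpos by linarith
  have phieq: "\<phi> a = \<phi> b \<longleftrightarrow> \<psi> a = \<psi> b" if "a \<in> V" "b \<in> V" for a b
  proof -
    have "\<psi> a \<in> V2" "\<psi> b \<in> V2" using psiV that by auto
    then show ?thesis unfolding \<phi>_def using h(2) by (simp add: inj_on_eq_iff)
  qed
  have fiber: "{b\<in>V. \<phi> b = \<phi> a} = (if a \<in> {u,v} then {u,v} else {a})" if "a \<in> V" for a
    using that V d phieq unfolding \<psi>_def by (auto split: if_splits)
  have LS: "lift \<phi> V ` ((\<lambda>j. {j}) ` {..<m}) = insert {u,v} ((\<lambda>a. {a}) ` (V - {u,v}))"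
  proof -
    have "lift \<phi> V ` ((\<lambda>j. {j}) ` {..<m}) = (\<lambda>a. {b\<in>V. \<phi> b = \<phi> a}) ` V"
      using lift_singletons[of \<phi> V] img by simp
    also have "\<dots> = (\<lambda>a. if a \<in> {u,v} then {u,v} else {a}) ` V"
      using fiber by (intro image_cong) auto
    also have "\<dots> = insert {u,v} ((\<lambda>a. {a}) ` (V - {u,v}))"
      using V by auto
    finally show ?thesis .
  qed
  define Q where "Q i = (if i = card V then (\<lambda>a. {a}) ` V else lift \<phi> V ` ((\<lambda>j. {j}) ` {..<m}))" for i
  have mV: "Suc m = card V" using cV2 cV cVpos by linarith
  have sc': "subcubic {..<m} (qE \<phi> V E)"
    unfolding subcubic_def
  proof
    fix i assume "i \<in> {..<m}"
    then obtain s where s: "s \<in> V" "i = \<phi> s" using img by auto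
    define T where "T = {b\<in>V. \<exists>a\<in>V. \<phi> a = \<phi> s \<and> E a b \<and> \<phi> b \<noteq> \<phi> s}"
    have c1: "card {j \<in> {..<m}. qE \<phi> V E i j} \<le> card T"
      using qE_deg[OF s(1) fV, of \<phi> E] img s(2) unfolding T_def by simp
    have "card T \<le> 3"
    proof (cases "s \<in> {u,v}")
      case True
      define A where "A = {y\<in>V. E u y} - {v}"
      define B where "B = {y\<in>V. E v y} - {u}"
      have fA: "finite A" "finite B" unfolding A_def B_def using fV by auto
      have cA: "card A \<le> 2" unfolding A_def using nbr_card[OF sg sc V(1)] e V
        by (simp add: card_Diff_singleton nbr_finite[OF sg])
      have cB: "card B \<le> 2" unfolding B_def using nbr_card[OF sg sc V(2)] e V sym
        by (simp add: card_Diff_singleton nbr_finite[OF sg])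
      have wAB: "w \<in> A \<inter> B" unfolding A_def B_def using e V sym d by auto
      have "card (A \<inter> B) \<ge> 1" using wAB fA
        by (metis One_nat_def Suc_leI card_gt_0_iff empty_iff finite_Int)
      then have cU: "card (A \<union> B) \<le> 3" using card_Un_Int[OF fA] cA cB by linarith
      have "T \<subseteq> A \<union> B"
      proof
        fix b assume "b \<in> T"
        then obtain a where a: "a \<in> V" "\<phi> a = \<phi> s" "E a b" "\<phi> b \<noteq> \<phi> s" "b \<in> V" unfolding T_def by auto
        have "a \<in> {u,v}" using fiber[OF s(1)] True a by auto
        moreover have "b \<notin> {u,v}" using fiber[OF s(1)] True a by auto
        ultimately show "b \<in> A \<union> B" unfolding A_def B_def using a by auto
      qed
      then show ?thesis using cU fA by (meson card_mono finite_UnI le_trans)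
    next
      case False
      have "T \<subseteq> {y\<in>V. E s y}"
      proof
        fix b assume "b \<in> T"
        then obtain a where a: "a \<in> V" "\<phi> a = \<phi> s" "E a b" "b \<in> V" unfolding T_def by auto
        have "a = s" using fiber[OF s(1)] False a by auto
        then show "b \<in> {y\<in>V. E s y}" using a by auto
      qed
      then show ?thesis using nbr_card[OF sg sc s(1)] nbr_finite[OF sg]
        by (meson card_mono le_trans)
    qed
    then show "card {j \<in> {..<m}. qE \<phi> V E i j} \<le> 3" using c1 by linarith
  qed
  show False
  proof (rule reduce[OF k9 sg sc tw minim img mlt _ sc', of Q])
    show "V \<noteq> {}" using V by auto
    show "Q (card V) = (\<lambda>v. {v}) ` V" unfolding Q_def by simp
    show "Q m = lift \<phi> V ` ((\<lambda>j. {j}) ` {..<m})" unfolding Q_def using mlt by simp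
    show "\<forall>i. m \<le> i \<and> i < card V \<longrightarrow> (\<exists>X\<in>Q (Suc i). \<exists>Y\<in>Q (Suc i). X \<noteq> Y \<and> Q i = insert (X \<union> Y) (Q (Suc i) - {X, Y}))"
    proof (intro allI impI)
      fix i assume "m \<le> i \<and> i < card V"
      then have i: "i = m" using mV by linarith
      have q1: "Q (Suc i) = (\<lambda>a. {a}) ` V" unfolding Q_def using i mV by simp
      have q2: "Q i = insert {u,v} ((\<lambda>a. {a}) ` (V - {u,v}))" unfolding Q_def using i mlt LS by simp
      have "(\<lambda>a. {a}) ` V - {{u},{v}} = (\<lambda>a. {a}) ` (V - {u,v})" by auto
      then have "Q i = insert ({u} \<union> {v}) (Q (Suc i) - {{u}, {v}})" using q1 q2 by (simp add: insert_commute)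
      moreover have "{u} \<in> Q (Suc i)" "{v} \<in> Q (Suc i)" "{u} \<noteq> {v}" using q1 V d by auto
      ultimately show "\<exists>X\<in>Q (Suc i). \<exists>Y\<in>Q (Suc i). X \<noteq> Y \<and> Q i = insert (X \<union> Y) (Q (Suc i) - {X, Y})"
        apply -
        apply (rule bexI[where x="{u}"])
         apply (rule bexI[where x="{v}"])
        by simp_all
    qed
    show "\<forall>i. m < i \<and> i \<le> card V \<longrightarrow> (\<forall>U\<in>Q i. card U \<le> 3)"
    proof (intro allI impI)
      fix i assume "m < i \<and> i \<le> card V"
      then have "i = card V" using mV by linarith
      then show "\<forall>U\<in>Q i. card U \<le> 3" unfolding Q_def by auto
    qed
  qed
qed



lemma qE_deg2:
  assumes "s \<in> V" and fV: "finite V"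
  shows "card {j \<in> \<phi> ` V. qE \<phi> V E (\<phi> s) j} \<le> card (\<phi> ` {b\<in>V. \<exists>a\<in>V. \<phi> a = \<phi> s \<and> E a b \<and> \<phi> b \<noteq> \<phi> s})"
proof -
  have "{j \<in> \<phi> ` V. qE \<phi> V E (\<phi> s) j} \<subseteq> \<phi> ` {b\<in>V. \<exists>a\<in>V. \<phi> a = \<phi> s \<and> E a b \<and> \<phi> b \<noteq> \<phi> s}"
  proof
    fix j assume "j \<in> {j \<in> \<phi> ` V. qE \<phi> V E (\<phi> s) j}"
    then obtain a b where ab: "a\<in>V" "b\<in>V" "E a b" "\<phi> a = \<phi> s" "\<phi> b = j" "j \<noteq> \<phi> s"
      unfolding qE_def by auto
    then show "j \<in> \<phi> ` {b\<in>V. \<exists>a\<in>V. \<phi> a = \<phi> s \<and> E a b \<and> \<phi> b \<noteq> \<phi> s}"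
      by (intro image_eqI[of _ _ b]) auto
  qed
  then show ?thesis using fV by (intro card_mono) auto
qed

lemma nbr_minus2:
  assumes sg: "simple_graph V E" and sc: "subcubic V E" and "E p r" "E p t" "r \<noteq> t"
  shows "card ({y\<in>V. E p y} - {r,t}) \<le> 1"
proof -
  have inV: "p \<in> V" "r \<in> V" "t \<in> V" using assms(3,4) sg unfolding simple_graph_def by auto
  have "card ({y\<in>V. E p y} - {r,t}) = card {y\<in>V. E p y} - card {r,t}"
    using assms(3,4) inV by (intro card_Diff_subset) auto
  moreover have "card {r,t} = 2" using assms(5) by simp
  moreover have "card {y\<in>V. E p y} \<le> 3" using nbr_card[OF sg sc inV(1)] .
  ultimately show ?thesis by linarith
qed

lemma pair_bound:
  assumes sg: "simple_graph V E" and sc: "subcubic V E"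
    and e: "E p r" "E p t" "E q r" "E q t" and rt: "r \<noteq> t" and ph: "\<phi> r = \<phi> t"
    and T: "T \<subseteq> {b\<in>V. E p b \<or> E q b}"
  shows "card (\<phi> ` T) \<le> 3"
proof -
  have fV: "finite V" using sg unfolding simple_graph_def by auto
  define A where "A = {y\<in>V. E p y} - {r,t}"
  define B where "B = {y\<in>V. E q y} - {r,t}"
  have cA: "card A \<le> 1" unfolding A_def using nbr_minus2[OF sg sc e(1,2) rt] .
  have cB: "card B \<le> 1" unfolding B_def using nbr_minus2[OF sg sc e(3,4) rt] .
  have fAB: "finite A" "finite B" unfolding A_def B_def using fV by auto
  have sub: "\<phi> ` T \<subseteq> insert (\<phi> r) (\<phi> ` A \<union> \<phi> ` B)"
  proof
    fix x assume "x \<in> \<phi> ` T"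
    then obtain b where b: "b \<in> T" "x = \<phi> b" by auto
    show "x \<in> insert (\<phi> r) (\<phi> ` A \<union> \<phi> ` B)"
    proof (cases "b \<in> {r,t}")
      case True
      then show ?thesis using b ph by auto
    next
      case False
      then have "b \<in> A \<union> B" using b T unfolding A_def B_def by auto
      then show ?thesis using b by auto
    qed
  qed
  have "card (\<phi> ` T) \<le> card (insert (\<phi> r) (\<phi> ` A \<union> \<phi> ` B))"
    using sub fAB by (intro card_mono) auto
  also have "\<dots> \<le> Suc (card (\<phi> ` A \<union> \<phi> ` B))"
    using fAB by (simp add: card_insert_if)
  also have "\<dots> \<le> Suc (card (\<phi> ` A) + card (\<phi> ` B))"
    using card_Un_le[of "\<phi> ` A" "\<phi> ` B"] by simp
  also have "\<dots> \<le> Suc (card A + card B)"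
    using card_image_le[OF fAB(1), of \<phi>] card_image_le[OF fAB(2), of \<phi>] by simp
  also have "\<dots> \<le> 3" using cA cB by simp
  finally show ?thesis .
qed


lemma c4_case:
  fixes V :: "'a set"
  assumes k9: "k > 9" and sg: "simple_graph V E" and sc: "subcubic V E" and tw: "tww V E \<ge> k"
    and minim: "\<forall>(W :: nat set) F. simple_graph W F \<and> subcubic W F \<and> tww W F \<ge> k \<longrightarrow> card V \<le> card W"
    and e: "E u w" "E w v" "E v z" "E z u" and d0: "u \<noteq> v" "w \<noteq> z"
  shows False
proof -
  have fV: "finite V" and sym: "\<And>x y. E x y \<Longrightarrow> E y x" and irr: "\<And>x. \<not> E x x"
    and inV: "\<And>x y. E x y \<Longrightarrow> x \<in> V \<and> y \<in> V"
    using sg unfolding simple_graph_def by auto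
  have d: "u \<noteq> w" "w \<noteq> v" "v \<noteq> z" "z \<noteq> u" using e irr by auto
  have V: "u \<in> V" "v \<in> V" "w \<in> V" "z \<in> V" using e inV by auto
  define \<psi> where "\<psi> a = (if a = v then u else if a = z then w else a)" for a
  define V2 where "V2 = V - {v,z}"
  have fV2: "finite V2" using fV unfolding V2_def by simp
  obtain h :: "'a \<Rightarrow> nat" and m :: nat where h: "h ` V2 = {i. i < m}" "inj_on h V2"
    using finite_imp_inj_to_nat_seg[OF fV2] by blast
  define \<phi> where "\<phi> a = h (\<psi> a)" for a
  have psiV: "\<psi> ` V = V2" unfolding \<psi>_def V2_def using V d d0 by auto
  have "\<phi> ` V = h ` (\<psi> ` V)" unfolding \<phi>_def by (simp add: image_image)
  then have img: "\<phi> ` V = {..<m}" using h(1) psiV by (simp add: lessThan_def)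
  have "card V2 = card (h ` V2)" using card_image[OF h(2)] by simp
  then have cV2: "card V2 = m" using h(1) by simp
  have "card V2 = card V - card {v,z}" unfolding V2_def using V fV by (intro card_Diff_subset) auto
  then have cV: "card V2 = card V - 2" using d by simp
  have "card {u,v,w,z} = 4" using d d0 by auto
  moreover have "card {u,v,w,z} \<le> card V" using V fV by (intro card_mono) auto
  ultimately have cVpos: "card V \<ge> 4" by simp
  have mV: "Suc (Suc m) = card V" using cV2 cV cVpos by linarith
  then have mlt: "m < card V" by linarith
  have phieq: "\<phi> a = \<phi> b \<longleftrightarrow> \<psi> a = \<psi> b" if "a \<in> V" "b \<in> V" for a b
  proof -
    have "\<psi> a \<in> V2" "\<psi> b \<in> V2" using psiV that by auto
    then show ?thesis unfolding \<phi>_def using h(2) by (simp add: inj_on_eq_iff)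
  qed
  have fiber: "{b\<in>V. \<phi> b = \<phi> a} = (if a \<in> {u,v} then {u,v} else if a \<in> {w,z} then {w,z} else {a})"
    if "a \<in> V" for a
    using that V d d0 phieq unfolding \<psi>_def by (auto split: if_splits)
  have phwz: "\<phi> w = \<phi> z" using phieq[OF V(3) V(4)] d d0 unfolding \<psi>_def by auto
  have phuv: "\<phi> u = \<phi> v" using phieq[OF V(1) V(2)] d d0 unfolding \<psi>_def by auto
  have LS: "lift \<phi> V ` ((\<lambda>j. {j}) ` {..<m}) = insert {u,v} (insert {w,z} ((\<lambda>a. {a}) ` (V - {u,v,w,z})))"
  proof -
    have "lift \<phi> V ` ((\<lambda>j. {j}) ` {..<m}) = (\<lambda>a. {b\<in>V. \<phi> b = \<phi> a}) ` V"
      using lift_singletons[of \<phi> V] img by simp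
    also have "\<dots> = (\<lambda>a. if a \<in> {u,v} then {u,v} else if a \<in> {w,z} then {w,z} else {a}) ` V"
      using fiber by (intro image_cong) auto
    also have "\<dots> = insert {u,v} (insert {w,z} ((\<lambda>a. {a}) ` (V - {u,v,w,z})))"
    proof
      show "(\<lambda>a. if a \<in> {u,v} then {u,v} else if a \<in> {w,z} then {w,z} else {a}) ` V
          \<subseteq> insert {u,v} (insert {w,z} ((\<lambda>a. {a}) ` (V - {u,v,w,z})))" by auto
      have "{u,v} \<in> (\<lambda>a. if a \<in> {u,v} then {u,v} else if a \<in> {w,z} then {w,z} else {a}) ` V"
        using V by (intro image_eqI[of _ _ u]) auto
      moreover have "{w,z} \<in> (\<lambda>a. if a \<in> {u,v} then {u,v} else if a \<in> {w,z} then {w,z} else {a}) ` V"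
        using V d d0 by (intro image_eqI[of _ _ w]) auto
      moreover have "(\<lambda>a. {a}) ` (V - {u,v,w,z}) \<subseteq> (\<lambda>a. if a \<in> {u,v} then {u,v} else if a \<in> {w,z} then {w,z} else {a}) ` V"
        by (auto intro!: image_eqI)
      ultimately show "insert {u,v} (insert {w,z} ((\<lambda>a. {a}) ` (V - {u,v,w,z})))
          \<subseteq> (\<lambda>a. if a \<in> {u,v} then {u,v} else if a \<in> {w,z} then {w,z} else {a}) ` V" by blast
    qed
    finally show ?thesis .
  qed
  define R where "R = insert {u,v} ((\<lambda>a. {a}) ` (V - {u,v}))"
  define Q where "Q i = (if i = card V then (\<lambda>a. {a}) ` V else if i = Suc m then R
     else lift \<phi> V ` ((\<lambda>j. {j}) ` {..<m}))" for i
  have sc': "subcubic {..<m} (qE \<phi> V E)"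
    unfolding subcubic_def
  proof
    fix i assume "i \<in> {..<m}"
    then obtain s where s: "s \<in> V" "i = \<phi> s" using img by auto
    define T where "T = {b\<in>V. \<exists>a\<in>V. \<phi> a = \<phi> s \<and> E a b \<and> \<phi> b \<noteq> \<phi> s}"
    have c1: "card {j \<in> {..<m}. qE \<phi> V E i j} \<le> card (\<phi> ` T)"
      using qE_deg2[OF s(1) fV, of \<phi> E] img s(2) unfolding T_def by simp
    have "card (\<phi> ` T) \<le> 3"
    proof (cases "s \<in> {u,v}")
      case True
      have "T \<subseteq> {b\<in>V. E u b \<or> E v b}"
      proof
        fix b assume "b \<in> T"
        then obtain a where a: "a \<in> V" "\<phi> a = \<phi> s" "E a b" "b \<in> V" unfolding T_def by auto
        have "a \<in> {u,v}" using fiber[OF s(1)] True a by auto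
        then show "b \<in> {b\<in>V. E u b \<or> E v b}" using a by auto
      qed
      then show ?thesis
        using pair_bound[OF sg sc e(1) sym[OF e(4)] sym[OF e(2)] e(3) d0(2) phwz] by blast
    next
      case False
      show ?thesis
      proof (cases "s \<in> {w,z}")
        case True
        have "T \<subseteq> {b\<in>V. E w b \<or> E z b}"
        proof
          fix b assume "b \<in> T"
          then obtain a where a: "a \<in> V" "\<phi> a = \<phi> s" "E a b" "b \<in> V" unfolding T_def by auto
          have "a \<in> {w,z}" using fiber[OF s(1)] True False a by auto
          then show "b \<in> {b\<in>V. E w b \<or> E z b}" using a by auto
        qed
        then show ?thesis
          using pair_bound[OF sg sc sym[OF e(1)] e(2) e(4) sym[OF e(3)] d0(1) phuv] by blast
      next
        case False2: False
        have "T \<subseteq> {y\<in>V. E s y}"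
        proof
          fix b assume "b \<in> T"
          then obtain a where a: "a \<in> V" "\<phi> a = \<phi> s" "E a b" "b \<in> V" unfolding T_def by auto
          have "a = s" using fiber[OF s(1)] False False2 a by auto
          then show "b \<in> {y\<in>V. E s y}" using a by auto
        qed
        then have "card T \<le> 3" using nbr_card[OF sg sc s(1)] nbr_finite[OF sg]
          by (meson card_mono le_trans)
        moreover have "finite T" unfolding T_def using fV by auto
        ultimately show ?thesis using card_image_le[of T \<phi>] by linarith
      qed
    qed
    then show "card {j \<in> {..<m}. qE \<phi> V E i j} \<le> 3" using c1 by linarith
  qed
  have uvS: "{u,v} \<noteq> {w}" "{u,v} \<noteq> {z}" using d0 by auto
  show False
  proof (rule reduce[OF k9 sg sc tw minim img mlt _ sc', of Q])
    show "V \<noteq> {}" using V by auto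
    show "Q (card V) = (\<lambda>v. {v}) ` V" unfolding Q_def by simp
    show "Q m = lift \<phi> V ` ((\<lambda>j. {j}) ` {..<m})" unfolding Q_def using mV by simp
    show "\<forall>i. m \<le> i \<and> i < card V \<longrightarrow> (\<exists>X\<in>Q (Suc i). \<exists>Y\<in>Q (Suc i). X \<noteq> Y \<and> Q i = insert (X \<union> Y) (Q (Suc i) - {X, Y}))"
    proof (intro allI impI)
      fix i assume "m \<le> i \<and> i < card V"
      then have "i = m \<or> i = Suc m" using mV by linarith
      then show "\<exists>X\<in>Q (Suc i). \<exists>Y\<in>Q (Suc i). X \<noteq> Y \<and> Q i = insert (X \<union> Y) (Q (Suc i) - {X, Y})"
      proof
        assume i: "i = Suc m"
        have q1: "Q (Suc i) = (\<lambda>a. {a}) ` V" unfolding Q_def using i mV by simp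
        have q2: "Q i = insert {u,v} ((\<lambda>a. {a}) ` (V - {u,v}))" unfolding Q_def R_def using i mV by simp
        have "(\<lambda>a. {a}) ` V - {{u},{v}} = (\<lambda>a. {a}) ` (V - {u,v})" by auto
        then have "Q i = insert ({u} \<union> {v}) (Q (Suc i) - {{u}, {v}})" using q1 q2 by (simp add: insert_commute)
        moreover have "{u} \<in> Q (Suc i)" "{v} \<in> Q (Suc i)" "{u} \<noteq> {v}" using q1 V d0 by auto
        ultimately show ?thesis
          apply -
          apply (rule bexI[where x="{u}"])
           apply (rule bexI[where x="{v}"])
          by simp_all
      next
        assume i: "i = m"
        have q1: "Q (Suc i) = R" unfolding Q_def using i mV by simp
        have q2: "Q i = insert {u,v} (insert {w,z} ((\<lambda>a. {a}) ` (V - {u,v,w,z})))"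
          unfolding Q_def using i mV LS by simp
        have "(\<lambda>a. {a}) ` (V - {u,v}) - {{w},{z}} = (\<lambda>a. {a}) ` (V - {u,v,w,z})" by auto
        then have "R - {{w},{z}} = insert {u,v} ((\<lambda>a. {a}) ` (V - {u,v,w,z}))"
          unfolding R_def using uvS by auto
        then have "Q i = insert ({w} \<union> {z}) (Q (Suc i) - {{w}, {z}})" using q1 q2 by (simp add: insert_commute)
        moreover have "{w} \<in> Q (Suc i)" "{z} \<in> Q (Suc i)" "{w} \<noteq> {z}" using q1 V d d0 unfolding R_def by auto
        ultimately show ?thesis
          apply -
          apply (rule bexI[where x="{w}"])
           apply (rule bexI[where x="{z}"])
          by simp_all
      qed
    qed
    show "\<forall>i. m < i \<and> i \<le> card V \<longrightarrow> (\<forall>U\<in>Q i. card U \<le> 3)"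
    proof (intro allI impI)
      fix i assume "m < i \<and> i \<le> card V"
      then have "i = card V \<or> i = Suc m" using mV by linarith
      then show "\<forall>U\<in>Q i. card U \<le> 3"
      proof
        assume "i = card V" then show ?thesis unfolding Q_def by auto
      next
        assume "i = Suc m"
        then have "Q i = R" unfolding Q_def using mV by simp
        moreover have "card {u,v} \<le> 3" by (simp add: card_insert_if)
        ultimately show ?thesis unfolding R_def by auto
      qed
    qed
  qed
qed



theorem mainTheorem12:
  fixes k :: nat and V :: "'a set" and E :: "'a \<Rightarrow> 'a \<Rightarrow> bool"
  assumes "k > 9"
    and "simple_graph V E" and "subcubic V E" and "tww V E \<ge> k"
    and "\<forall>(W :: nat set) F. simple_graph W F \<and> subcubic W F \<and> tww W F \<ge> k \<longrightarrow> card V \<le> card W"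
  shows "girth V E \<ge> 5"
proof -
  have no_short: "5 \<le> l" if hc: "has_cycle V E l" for l
  proof (rule ccontr)
    assume "\<not> 5 \<le> l"
    obtain f where f: "inj_on f {..<l}" "\<forall>i<l. E (f i) (f ((i + 1) mod l))" and l3: "l \<ge> 3"
      using hc unfolding has_cycle_def by blast
    have "l = 3 \<or> l = 4" using \<open>\<not> 5 \<le> l\<close> l3 by linarith
    then show False
    proof
      assume l: "l = 3"
      have "E (f 0) (f 1)"
      proof -
        have "E (f 0) (f ((0 + 1) mod l))" by (rule f(2)[rule_format]) (use l in simp)
        moreover have "((0::nat) + 1) mod l = 1" using l by simp
        ultimately show ?thesis by (simp only:)
      qed
      moreover have "E (f 1) (f 2)"
      proof -
        have "E (f 1) (f ((1 + 1) mod l))" by (rule f(2)[rule_format]) (use l in simp)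
        moreover have "((1::nat) + 1) mod l = 2" using l by simp
        ultimately show ?thesis by (simp only:)
      qed
      moreover have "E (f 2) (f 0)"
      proof -
        have "E (f 2) (f ((2 + 1) mod l))" by (rule f(2)[rule_format]) (use l in simp)
        moreover have "((2::nat) + 1) mod l = 0" using l by simp
        ultimately show ?thesis by (simp only:)
      qed
      ultimately show False using tri_case[OF assms(1-5)] by blast
    next
      assume l: "l = 4"
      have e1: "E (f 0) (f 1)"
      proof -
        have "E (f 0) (f ((0 + 1) mod l))" by (rule f(2)[rule_format]) (use l in simp)
        moreover have "((0::nat) + 1) mod l = 1" using l by simp
        ultimately show ?thesis by (simp only:)
      qed
      have e2: "E (f 1) (f 2)"
      proof -
        have "E (f 1) (f ((1 + 1) mod l))" by (rule f(2)[rule_format]) (use l in simp)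
        moreover have "((1::nat) + 1) mod l = 2" using l by simp
        ultimately show ?thesis by (simp only:)
      qed
      have e3: "E (f 2) (f 3)"
      proof -
        have "E (f 2) (f ((2 + 1) mod l))" by (rule f(2)[rule_format]) (use l in simp)
        moreover have "((2::nat) + 1) mod l = 3" using l by simp
        ultimately show ?thesis by (simp only:)
      qed
      have e4: "E (f 3) (f 0)"
      proof -
        have "E (f 3) (f ((3 + 1) mod l))" by (rule f(2)[rule_format]) (use l in simp)
        moreover have "((3::nat) + 1) mod l = 0" using l by simp
        ultimately show ?thesis by (simp only:)
      qed
      note e = e1 e2 e3 e4
      have "f 0 \<noteq> f 2" "f 1 \<noteq> f 3" using f(1) l by (simp_all add: inj_on_eq_iff)
      then show False using c4_case[OF assms(1-5) e] by blast
    qed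
  qed
  show ?thesis unfolding girth_def
  proof (rule Inf_greatest)
    fix x assume "x \<in> {enat l |l. has_cycle V E l}"
    then obtain l where "x = enat l" "has_cycle V E l" by auto
    then show "5 \<le> x" using no_short by (simp add: numeral_eq_enat)
  qed
qed


end
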